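(* Let $W_2\in\{M_2,S_2\}$ and let $\phi:W_2\to W_2$ be a linear map such that $\sigma_{\mathcal{K}}(\phi(A))=\sigma_{\mathcal{K}}(A)$ for all $A\in W_2$. Then for all $A\in W_2$, $$\sigma_{\mathcal{K}}^{int}(A)=\sigma_{\mathcal{K}}^{int}(\phi(A))\quad\text{and}\quad \sigma_{\mathcal{K}}^{bd}(A)=\sigma_{\mathcal{K}}^{bd}(\phi(A)).$$
   Context: $M_2$ is the space of real $2\times2$ matrices, $S_2$ the subspace of symmetric ones. The Lorentz cone in $\mathbb{R}^2$ is $\mathcal{K}=\{(x_1,x_2)^T:\ |x_1|\le x_2\}$. For $A\in M_2$, a real $\lambda$ is an L-eigenvalue of $A$ if there is a nonzero $x\in\mathcal{K}$ with $(A-\lambda I)x\in\mathcal{K}$ and $x^T(A-\lambda I)x=0$ ($x$ is an associated L-eigenvector); $\sigma_{\mathcal{K}}(A)$ is the set of L-eigenvalues. $\lambda$ is an interior L-eigenvalue if it has an associated L-eigenvector in the interior of $\mathcal{K}$, and a boundary L-eigenvalue if it has an associated L-eigenvector on the boundary of $\mathcal{K}$; $\sigma_{\mathcal{K}}^{int}(A)$ and $\sigma_{\mathcal{K}}^{bd}(A)$ denote the sets of interior and boundary L-eigenvalues. *)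

theory Defs
  imports "HOL-Analysis.Analysis"
begin

type_synonym mat2 = "real^2^2"

definition lorentz_cone :: "(real^2) set" where
  "lorentz_cone = {x. \<bar>x$1\<bar> \<le> x$2}"

definition is_L_eigvec :: "mat2 \<Rightarrow> real \<Rightarrow> real^2 \<Rightarrow> bool" where
  "is_L_eigvec A lam x \<longleftrightarrow> x \<noteq> 0 \<and> x \<in> lorentz_cone \<and>
     (A - lam *\<^sub>R mat 1) *v x \<in> lorentz_cone \<and> x \<bullet> ((A - lam *\<^sub>R mat 1) *v x) = 0"

definition L_spectrum :: "mat2 \<Rightarrow> real set" where
  "L_spectrum A = {lam. \<exists>x. is_L_eigvec A lam x}"

definition L_spectrum_int :: "mat2 \<Rightarrow> real set" where
  "L_spectrum_int A = {lam. \<exists>x. is_L_eigvec A lam x \<and> x \<in> interior lorentz_cone}"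

definition L_spectrum_bd :: "mat2 \<Rightarrow> real set" where
  "L_spectrum_bd A = {lam. \<exists>x. is_L_eigvec A lam x \<and> x \<in> frontier lorentz_cone}"

definition sym_mats :: "mat2 set" where
  "sym_mats = {A. transpose A = A}"

end

theory Submission
  imports Defs
begin


lemma ia: "(axis 1 (1::real) - axis 2 1 :: real^2) \<bullet> x = x$1 - x$2"
    by (simp add: inner_diff_left inner_axis')
lemma ib: "(- axis 1 (1::real) - axis 2 1 :: real^2) \<bullet> x = - x$1 - x$2"
    by (simp add: inner_diff_left inner_axis')
lemma a0: "(axis 1 (1::real) - axis 2 1 :: real^2) \<noteq> 0"
  proof
    assume "(axis 1 (1::real) - axis 2 1 :: real^2) = 0"
    then have "(axis 1 (1::real) - axis 2 1 :: real^2) \<bullet> axis 1 1 = 0" by simp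
    then show False unfolding ia by (simp add: axis_def)
  qed
lemma b0: "(- axis 1 (1::real) - axis 2 1 :: real^2) \<noteq> 0"
  proof
    assume "(- axis 1 (1::real) - axis 2 1 :: real^2) = 0"
    then have "(- axis 1 (1::real) - axis 2 1 :: real^2) \<bullet> axis 1 1 = 0" by simp
    then show False unfolding ib by (simp add: axis_def)
  qed

lemma lc_eq: "lorentz_cone = {x. (axis 1 (1::real) - axis 2 1 :: real^2) \<bullet> x \<le> 0} \<inter> {x. (- axis 1 (1::real) - axis 2 1 :: real^2) \<bullet> x \<le> 0}"
proof (rule set_eqI)
  fix x :: "real^2"
  show "x \<in> lorentz_cone \<longleftrightarrow> x \<in> {x. (axis 1 (1::real) - axis 2 1 :: real^2) \<bullet> x \<le> 0} \<inter> {x. (- axis 1 (1::real) - axis 2 1 :: real^2) \<bullet> x \<le> 0}"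
    unfolding lorentz_cone_def Int_iff mem_Collect_eq abs_le_iff ia ib by linarith
qed

lemma lc_int: "interior lorentz_cone = {x. \<bar>x$1\<bar> < x$2}"
proof -
  have "interior lorentz_cone = {x. (axis 1 (1::real) - axis 2 1 :: real^2) \<bullet> x < 0} \<inter> {x. (- axis 1 (1::real) - axis 2 1 :: real^2) \<bullet> x < 0}"
    unfolding lc_eq interior_Int interior_halfspace_le[OF a0] interior_halfspace_le[OF b0] ..
  also have "\<dots> = {x. \<bar>x$1\<bar> < x$2}"
  proof (rule set_eqI)
    fix x :: "real^2"
    show "x \<in> {x. (axis 1 (1::real) - axis 2 1 :: real^2) \<bullet> x < 0} \<inter> {x. (- axis 1 (1::real) - axis 2 1 :: real^2) \<bullet> x < 0} \<longleftrightarrow> x \<in> {x. \<bar>x$1\<bar> < x$2}"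
      unfolding Int_iff mem_Collect_eq abs_less_iff ia ib by linarith
  qed
  finally show ?thesis .
qed

lemma lc_closed: "closed lorentz_cone"
  unfolding lc_eq by (intro closed_Int closed_halfspace_le)

lemma lc_front: "frontier lorentz_cone = {x. \<bar>x$1\<bar> = x$2}"
proof (rule set_eqI)
  fix x :: "real^2"
  have f: "frontier lorentz_cone = lorentz_cone - interior lorentz_cone"
    unfolding frontier_def closure_closed[OF lc_closed] ..
  show "x \<in> frontier lorentz_cone \<longleftrightarrow> x \<in> {x. \<bar>x$1\<bar> = x$2}"
    unfolding f lc_int Diff_iff mem_Collect_eq unfolding lorentz_cone_def mem_Collect_eq
    by linarith
qed


definition pa :: "mat2 \<Rightarrow> real" where "pa A = (A$1$1 + A$1$2 + A$2$1 + A$2$2)/2"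
definition pb :: "mat2 \<Rightarrow> real" where "pb A = (- A$1$1 + A$1$2 - A$2$1 + A$2$2)/2"
definition pc :: "mat2 \<Rightarrow> real" where "pc A = (- A$1$1 - A$1$2 + A$2$1 + A$2$2)/2"
definition pd :: "mat2 \<Rightarrow> real" where "pd A = (A$1$1 - A$1$2 - A$2$1 + A$2$2)/2"

definition PZ :: "real \<Rightarrow> real \<Rightarrow> real \<Rightarrow> real \<Rightarrow> real \<Rightarrow> real \<Rightarrow> real \<Rightarrow> bool" where
  "PZ a b c d l z1 z2 \<longleftrightarrow> z1 \<ge> 0 \<and> z2 \<ge> 0 \<and> (z1 \<noteq> 0 \<or> z2 \<noteq> 0) \<and> (a-l) * z1 + b * z2 \<ge> 0 \<and>
     c * z1 + (d-l) * z2 \<ge> 0 \<and> z1 * ((a-l) * z1 + b * z2) + z2 * (c * z1 + (d-l) * z2) = 0"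

lemma mv1: "(((A::mat2) - l *\<^sub>R mat 1) *v x) $ 1 = (A$1$1 - l) * x$1 + A$1$2 * x$2"
  by (simp add: matrix_vector_mult_def sum_2 mat_def algebra_simps)
lemma mv2: "(((A::mat2) - l *\<^sub>R mat 1) *v x) $ 2 = A$2$1 * x$1 + (A$2$2 - l) * x$2"
  by (simp add: matrix_vector_mult_def sum_2 mat_def algebra_simps)

lemma vec2_eq0: "(x::real^2) = 0 \<longleftrightarrow> x$1 = 0 \<and> x$2 = 0"
  by (simp add: vec_eq_iff forall_2)

lemma inner2: "(x::real^2) \<bullet> y = x$1 * y$1 + x$2 * y$2"
  by (simp add: inner_vec_def sum_2)

lemma aux_lin: fixes x1 x2 y1 y2 P :: real
  shows "(\<not> (x1 = 0 \<and> x2 = 0) \<and> (x1 \<le> x2 \<and> - x1 \<le> x2) \<and> (y1 \<le> y2 \<and> - y1 \<le> y2) \<and> P = 0) =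
     (0 \<le> x2 + x1 \<and> 0 \<le> x2 - x1 \<and> (x2 + x1 \<noteq> 0 \<or> x2 - x1 \<noteq> 0) \<and>
      0 \<le> y2 + y1 \<and> 0 \<le> y2 - y1 \<and> 2 * P = 0)"
  by linarith

lemma eig_iff: "is_L_eigvec A l x \<longleftrightarrow> PZ (pa A) (pb A) (pc A) (pd A) l (x$2 + x$1) (x$2 - x$1)"
proof -
  define y where "y = (A - l *\<^sub>R mat 1) *v x"
  have y1: "y$1 = (A$1$1 - l) * x$1 + A$1$2 * x$2" unfolding y_def mv1 ..
  have y2: "y$2 = A$2$1 * x$1 + (A$2$2 - l) * x$2" unfolding y_def mv2 ..
  have w1: "(pa A - l) * (x$2 + x$1) + pb A * (x$2 - x$1) = y$2 + y$1"
    unfolding y1 y2 pa_def pb_def by (simp add: field_simps)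
  have w2: "pc A * (x$2 + x$1) + (pd A - l) * (x$2 - x$1) = y$2 - y$1"
    unfolding y1 y2 pc_def pd_def by (simp add: field_simps)
  have ip: "2 * (x \<bullet> y) = (x$2 + x$1) * (y$2 + y$1) + (x$2 - x$1) * (y$2 - y$1)"
    unfolding inner2 by (simp add: field_simps)
  show ?thesis
    unfolding is_L_eigvec_def y_def[symmetric] PZ_def w1 w2 ip[symmetric] vec2_eq0 lorentz_cone_def mem_Collect_eq abs_le_iff
    by (rule aux_lin)
qed



definition bdP :: "real \<Rightarrow> real \<Rightarrow> real \<Rightarrow> real \<Rightarrow> real \<Rightarrow> bool" where
  "bdP a b c d l \<longleftrightarrow> (l = a \<and> c \<ge> 0) \<or> (l = d \<and> b \<ge> 0)"
definition intP :: "real \<Rightarrow> real \<Rightarrow> real \<Rightarrow> real \<Rightarrow> real \<Rightarrow> bool" where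
  "intP a b c d l \<longleftrightarrow> (\<exists>t>0. b = t * (l-a) \<and> l - d = t * c)"
definition specP :: "real \<Rightarrow> real \<Rightarrow> real \<Rightarrow> real \<Rightarrow> real \<Rightarrow> bool" where
  "specP a b c d l \<longleftrightarrow> bdP a b c d l \<or> intP a b c d l"

lemma intP_swap: "intP d c b a l \<longleftrightarrow> intP a b c d l"
proof
  assume "intP d c b a l"
  then obtain t where t: "t > 0" "c = t * (l-d)" "l - a = t * b" unfolding intP_def by auto
  show "intP a b c d l" unfolding intP_def
  proof (intro exI[of _ "1/t"] conjI)
    show "1/t > 0" using t by simp
    show "b = 1/t * (l - a)" using t by (simp add: field_simps)
    show "l - d = 1/t * c" using t by (simp add: field_simps)
  qed
next
  assume "intP a b c d l"
  then obtain t where t: "t > 0" "b = t * (l-a)" "l - d = t * c" unfolding intP_def by auto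
  show "intP d c b a l" unfolding intP_def
  proof (intro exI[of _ "1/t"] conjI)
    show "1/t > 0" using t by simp
    show "c = 1/t * (l - d)" using t by (simp add: field_simps)
    show "l - a = 1/t * b" using t by (simp add: field_simps)
  qed
qed

lemma bdP_swap: "bdP d c b a l \<longleftrightarrow> bdP a b c d l"
  unfolding bdP_def by auto

lemma specP_swap: "specP d c b a l \<longleftrightarrow> specP a b c d l"
  unfolding specP_def using intP_swap bdP_swap by blast

lemma intP_scale: assumes "k > 0" shows "intP a (k * b) (c/k) d l \<longleftrightarrow> intP a b c d l"
proof
  assume "intP a (k * b) (c/k) d l"
  then obtain t where t: "t > 0" "k * b = t * (l-a)" "l - d = t * (c/k)" unfolding intP_def by auto
  show "intP a b c d l" unfolding intP_def
  proof (intro exI[of _ "t/k"] conjI)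
    show "t/k > 0" using t assms by simp
    show "b = t/k * (l - a)" using t assms by (simp add: field_simps)
    show "l - d = t/k * c" using t assms by (simp add: field_simps)
  qed
next
  assume "intP a b c d l"
  then obtain t where t: "t > 0" "b = t * (l-a)" "l - d = t * c" unfolding intP_def by auto
  show "intP a (k * b) (c/k) d l" unfolding intP_def
  proof (intro exI[of _ "t * k"] conjI)
    show "t * k > 0" using t assms by simp
    show "k * b = t * k * (l - a)" unfolding t(2) by (simp add: algebra_simps)
    show "l - d = t * k * (c/k)" using t assms by (simp add: field_simps)
  qed
qed

lemma bdP_scale: assumes "k > 0" shows "bdP a (k * b) (c/k) d l \<longleftrightarrow> bdP a b c d l"
  unfolding bdP_def using assms by (auto simp: zero_le_mult_iff zero_le_divide_iff)


lemma spec_0bc0: assumes "b = 0 \<or> c = 0" "specP 0 b c 0 l" shows "l = 0"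
  using assms unfolding specP_def bdP_def intP_def by auto

lemma spec_pos: assumes "l > 0" "specP 0 p q 0 l" shows "p > 0 \<and> q > 0 \<and> p * q = l * l"
proof -
  have "\<not> bdP 0 p q 0 l" using assms(1) unfolding bdP_def by auto
  then obtain t where t: "t > 0" "p = t * l" "l = t * q" using assms(2) unfolding specP_def intP_def by auto
  have "p > 0" using t assms(1) by simp
  moreover have "0 < t * q" using t(3) assms(1) by simp
  then have "q > 0" using t(1) by (simp add: zero_less_mult_iff)
  moreover have "p * q = l * l" using t by (simp add: algebra_simps)
  ultimately show ?thesis by simp
qed

lemma spec_sq: assumes "l > 0" shows "specP 0 1 (l * l) 0 l"
  unfolding specP_def intP_def using assms by (intro disjI2 exI[of _ "1/l"]) (simp add: field_simps)

lemma diag_zero: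
  assumes "\<forall>l. specP g1 g2 g3 g4 l \<longrightarrow> l = 0" "\<forall>l. specP (-g1) (-g2) (-g3) (-g4) l \<longrightarrow> l = 0"
  shows "g1 = 0 \<and> g4 = 0"
proof -
  have "g1 = 0"
  proof (cases "g3 \<ge> 0")
    case True then have "specP g1 g2 g3 g4 g1" unfolding specP_def bdP_def by simp
    then show ?thesis using assms(1) by auto
  next
    case False then have "specP (-g1) (-g2) (-g3) (-g4) (-g1)" unfolding specP_def bdP_def by simp
    then show ?thesis using assms(2) by auto
  qed
  moreover have "g4 = 0"
  proof (cases "g2 \<ge> 0")
    case True then have "specP g1 g2 g3 g4 g4" unfolding specP_def bdP_def by simp
    then show ?thesis using assms(1) by auto
  next
    case False then have "specP (-g1) (-g2) (-g3) (-g4) (-g4)" unfolding specP_def bdP_def by simp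
    then show ?thesis using assms(2) by auto
  qed
  ultimately show ?thesis by simp
qed

lemma diagA: assumes "N > \<bar>p - q\<bar>" "specP p (-N) N q l" shows "l = p"
proof (rule ccontr)
  assume ne: "l \<noteq> p"
  have N: "N > 0" using assms(1) by linarith
  have "\<not> bdP p (-N) N q l" using ne N unfolding bdP_def by auto
  then obtain t where t: "t > 0" "-N = t * (l-p)" "l - q = t * N" using assms(2) unfolding specP_def intP_def by auto
  have e: "t * (p-q) = t * t * N + N" using t by (simp add: algebra_simps)
  have "N * ((t-1) * (t-1)) \<ge> 0" using N by simp
  then have "t * t * N + N \<ge> 2 * t * N" by (simp add: algebra_simps)
  then have "t * (p-q) \<ge> t * (2 * N)" using e by simp
  then have "p - q \<ge> 2 * N" using t(1) by simp
  then show False using assms(1) N by linarith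
qed

lemma diagD: assumes "N > \<bar>p - q\<bar>" "specP p N (-N) q l" shows "l = q"
proof -
  have "specP q (-N) N p l" using assms(2) specP_swap by blast
  moreover have "N > \<bar>q - p\<bar>" using assms(1) by linarith
  ultimately show ?thesis using diagA by blast
qed

lemma F1: assumes "c < 0" shows "specP 1 b c 0 0 \<longleftrightarrow> b \<ge> 0"
  using assms unfolding specP_def bdP_def intP_def by auto

lemma F2: assumes "b < 0" shows "specP 1 b c 0 1 \<longleftrightarrow> c \<ge> 0"
  using assms unfolding specP_def bdP_def intP_def by auto

lemma F3: assumes "c < 0" shows "specP 0 b c 1 1 \<longleftrightarrow> b \<ge> 0"
  using assms unfolding specP_def bdP_def intP_def by auto

lemma F4: assumes "b < 0" shows "specP 0 b c 1 0 \<longleftrightarrow> c \<ge> 0"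
  using assms unfolding specP_def bdP_def intP_def by auto



lemma PZ_int: assumes "PZ a b c d l z1 z2" "z1 > 0" "z2 > 0" shows "intP a b c d l"
proof -
  let ?w1 = "(a-l) * z1 + b * z2" and ?w2 = "c * z1 + (d-l) * z2"
  have h: "?w1 \<ge> 0" "?w2 \<ge> 0" "z1 * ?w1 + z2 * ?w2 = 0" using assms(1) unfolding PZ_def by auto
  have "z1 * ?w1 \<ge> 0" "z2 * ?w2 \<ge> 0" using h assms(2,3) by auto
  then have "z1 * ?w1 = 0" "z2 * ?w2 = 0" using h(3) by linarith+
  then have e1: "?w1 = 0" and e2: "?w2 = 0" using assms(2,3) by auto
  show ?thesis unfolding intP_def
  proof (intro exI[of _ "z1/z2"] conjI)
    show "z1/z2 > 0" using assms by simp
    show "b = z1 / z2 * (l - a)" using e1 assms(3) by (simp add: field_simps)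
    show "l - d = z1 / z2 * c" using e2 assms(3) by (simp add: field_simps)
  qed
qed

lemma PZ_bd: assumes "PZ a b c d l z1 z2" "z1 = 0 \<or> z2 = 0" shows "bdP a b c d l"
proof -
  have h: "z1 \<ge> 0" "z2 \<ge> 0" "z1 \<noteq> 0 \<or> z2 \<noteq> 0" "(a-l) * z1 + b * z2 \<ge> 0" "c * z1 + (d-l) * z2 \<ge> 0"
     "z1 * ((a-l) * z1 + b * z2) + z2 * (c * z1 + (d-l) * z2) = 0" using assms(1) unfolding PZ_def by auto
  show ?thesis
  proof (cases "z1 = 0")
    case True
    then have z2: "z2 > 0" using h by auto
    have "z2 * ((d-l) * z2) = 0" using h(6) True by simp
    then have "l = d" using z2 by simp
    moreover have "b * z2 \<ge> 0" using h(4) True by simp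
    then have "b \<ge> 0" using z2 by (simp add: zero_le_mult_iff)
    ultimately show ?thesis unfolding bdP_def by simp
  next
    case False
    then have z1: "z1 > 0" and z2: "z2 = 0" using h assms(2) by auto
    have "z1 * ((a-l) * z1) = 0" using h(6) z2 by simp
    then have "l = a" using z1 by simp
    moreover have "c * z1 \<ge> 0" using h(5) z2 by simp
    then have "c \<ge> 0" using z1 by (simp add: zero_le_mult_iff)
    ultimately show ?thesis unfolding bdP_def by simp
  qed
qed

lemma int_PZ: assumes "b = t * (l-a)" "l - d = t * c" "t > 0" shows "PZ a b c d l (2 * t) 2"
proof -
  have w1: "(a-l) * (2 * t) + b*2 = 0" using assms(1) by (simp add: algebra_simps)
  have w2: "c * (2 * t) + (d-l)*2 = 0" using assms(2) by (simp add: algebra_simps)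
  show ?thesis unfolding PZ_def w1 w2 using assms(3) by simp
qed

lemma mkx: "(vector [(z1 - z2)/2, (z1 + z2)/2] :: real^2)$2 + (vector [(z1 - z2)/2, (z1 + z2)/2] :: real^2)$1 = z1"
  "(vector [(z1 - z2)/2, (z1 + z2)/2] :: real^2)$2 - (vector [(z1 - z2)/2, (z1 + z2)/2] :: real^2)$1 = z2"
  by (simp_all add: field_simps)

lemma L_int_iff: "l \<in> L_spectrum_int A \<longleftrightarrow> intP (pa A) (pb A) (pc A) (pd A) l"
proof
  assume "l \<in> L_spectrum_int A"
  then obtain x where x: "is_L_eigvec A l x" "x \<in> interior lorentz_cone" unfolding L_spectrum_int_def by auto
  have "\<bar>x$1\<bar> < x$2" using x(2) unfolding lc_int by simp
  then have "x$2 + x$1 > 0" "x$2 - x$1 > 0" by linarith+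
  then show "intP (pa A) (pb A) (pc A) (pd A) l" using PZ_int x(1) unfolding eig_iff by blast
next
  assume i: "intP (pa A) (pb A) (pc A) (pd A) l"
  then obtain t where t: "pb A = t * (l - pa A)" "l - pd A = t * pc A" "t > 0" unfolding intP_def by auto
  define x where "x = (vector [(2 * t - 2)/2, (2 * t + 2)/2] :: real^2)"
  have "is_L_eigvec A l x" unfolding eig_iff x_def mkx using int_PZ[OF t] .
  moreover have "x \<in> interior lorentz_cone" unfolding lc_int x_def using t(3) by simp
  ultimately show "l \<in> L_spectrum_int A" unfolding L_spectrum_int_def by auto
qed

lemma L_bd_iff: "l \<in> L_spectrum_bd A \<longleftrightarrow> bdP (pa A) (pb A) (pc A) (pd A) l"
proof
  assume "l \<in> L_spectrum_bd A"
  then obtain x where x: "is_L_eigvec A l x" "x \<in> frontier lorentz_cone" unfolding L_spectrum_bd_def by auto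
  have "\<bar>x$1\<bar> = x$2" using x(2) unfolding lc_front by simp
  then have "x$2 + x$1 = 0 \<or> x$2 - x$1 = 0" by linarith
  then show "bdP (pa A) (pb A) (pc A) (pd A) l" using PZ_bd x(1) unfolding eig_iff by blast
next
  assume "bdP (pa A) (pb A) (pc A) (pd A) l"
  then consider "l = pa A" "pc A \<ge> 0" | "l = pd A" "pb A \<ge> 0" unfolding bdP_def by auto
  then obtain z1 z2 where z: "PZ (pa A) (pb A) (pc A) (pd A) l z1 z2" "z1 = 0 \<or> z2 = 0"
  proof cases
    case 1
    then have "PZ (pa A) (pb A) (pc A) (pd A) l 1 0" unfolding PZ_def by simp
    then show ?thesis using that by blast
  next
    case 2
    then have "PZ (pa A) (pb A) (pc A) (pd A) l 0 1" unfolding PZ_def by simp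
    then show ?thesis using that by blast
  qed
  define x where "x = (vector [(z1 - z2)/2, (z1 + z2)/2] :: real^2)"
  have "is_L_eigvec A l x" unfolding eig_iff x_def mkx using z(1) .
  moreover have "z1 \<ge> 0" "z2 \<ge> 0" using z(1) unfolding PZ_def by auto
  then have "x \<in> frontier lorentz_cone" unfolding lc_front x_def using z(2) by auto
  ultimately show "l \<in> L_spectrum_bd A" unfolding L_spectrum_bd_def by auto
qed

lemma L_spec_iff: "l \<in> L_spectrum A \<longleftrightarrow> specP (pa A) (pb A) (pc A) (pd A) l"
proof -
  have "L_spectrum A = L_spectrum_int A \<union> L_spectrum_bd A"
  proof (rule set_eqI, rule iffI)
    fix m assume "m \<in> L_spectrum A"
    then obtain x where x: "is_L_eigvec A m x" unfolding L_spectrum_def by auto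
    have "PZ (pa A) (pb A) (pc A) (pd A) m (x$2 + x$1) (x$2 - x$1)" using x unfolding eig_iff .
    then have "x$2 + x$1 \<ge> 0" "x$2 - x$1 \<ge> 0" unfolding PZ_def by auto
    then have "(x$2 + x$1 > 0 \<and> x$2 - x$1 > 0) \<or> \<bar>x$1\<bar> = x$2" by linarith
    moreover have "(x$2 + x$1 > 0 \<and> x$2 - x$1 > 0) \<longleftrightarrow> \<bar>x$1\<bar> < x$2" by linarith
    ultimately have "x \<in> interior lorentz_cone \<or> x \<in> frontier lorentz_cone"
      unfolding lc_int lc_front by auto
    then show "m \<in> L_spectrum_int A \<union> L_spectrum_bd A"
      using x unfolding L_spectrum_int_def L_spectrum_bd_def by auto
  next
    fix m assume "m \<in> L_spectrum_int A \<union> L_spectrum_bd A"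
    then show "m \<in> L_spectrum A" unfolding L_spectrum_int_def L_spectrum_bd_def L_spectrum_def by auto
  qed
  then show ?thesis unfolding specP_def using L_int_iff L_bd_iff by auto
qed



lemma norm_core:
  fixes k x1 x2 x3 x4 y1 y2 y3 y4 :: real
  assumes k: "k > 0"
    and H: "\<And>a b c d l. specP a b c d l \<longleftrightarrow>
       specP (a * x1 + d * y1) (a * x2 + b * k + d * y2) (a * x3 + c/k + d * y3) (a * x4 + d * y4) l"
  shows "x1 = 1 \<and> x2 = 0 \<and> x3 = 0 \<and> x4 = 0 \<and> y1 = 0 \<and> y2 = 0 \<and> y3 = 0 \<and> y4 = 1"
proof -
  have diag: "\<alpha>*x1 + \<beta>*y1 = \<alpha> \<and> \<alpha>*x4 + \<beta>*y4 = \<beta>" for \<alpha> \<beta>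
  proof -
    define p where "p = \<alpha>*x1 + \<beta>*y1"
    define q where "q = \<alpha>*x4 + \<beta>*y4"
    define o1 where "o1 = \<alpha>*x2 + \<beta>*y2"
    define o2 where "o2 = \<alpha>*x3 + \<beta>*y3"
    define N where "N = \<bar>p - q\<bar> + \<bar>o1\<bar> + \<bar>o2\<bar> + 1"
    have N1: "N > \<bar>p - q\<bar>" "N \<ge> o1" "N \<ge> -o1" "N \<ge> o2" "N \<ge> -o2" unfolding N_def by linarith+
    have HH: "specP \<alpha> b c \<beta> l \<longleftrightarrow> specP p (o1 + b * k) (o2 + c/k) q l" for b c l
      using H[of \<alpha> b c \<beta> l] unfolding p_def q_def o1_def o2_def by (simp add: algebra_simps)
    have "specP \<alpha> ((-N - o1)/k) (k * (N - o2)) \<beta> \<alpha>"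
      unfolding specP_def bdP_def using N1 k by simp
    then have "specP p (o1 + (-N - o1)/k * k) (o2 + k * (N - o2)/k) q \<alpha>" using HH by blast
    then have "specP p (-N) N q \<alpha>" using k by simp
    then have A: "\<alpha> = p" using diagA N1(1) by blast
    have "specP \<alpha> ((N - o1)/k) (-k * (N + o2)) \<beta> \<beta>"
      unfolding specP_def bdP_def using N1 k by simp
    then have "specP p (o1 + (N - o1)/k * k) (o2 + (-k * (N + o2))/k) q \<beta>" using HH by blast
    then have "specP p N (-N) q \<beta>" using k by simp
    then have B: "\<beta> = q" using diagD N1(1) by blast
    show ?thesis using A B unfolding p_def q_def by simp
  qed
  have x1: "x1 = 1" and x4: "x4 = 0" using diag[of 1 0] by simp_all
  have y1: "y1 = 0" and y4: "y4 = 1" using diag[of 0 1] by simp_all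
  have HX: "specP 1 b c 0 l \<longleftrightarrow> specP 1 (x2 + b * k) (x3 + c/k) 0 l" for b c l
    using H[of 1 b c 0 l] x1 x4 by simp
  have HY: "specP 0 b c 1 l \<longleftrightarrow> specP 0 (y2 + b * k) (y3 + c/k) 1 l" for b c l
    using H[of 0 b c 1 l] y1 y4 by (simp add: ac_simps)
  
  define c0 where "c0 = -k * (\<bar>x3\<bar>+1)"
  have c0: "c0 < 0" "x3 + c0/k < 0" unfolding c0_def using k by (simp_all add: mult_pos_pos)
  have "specP 1 0 c0 0 0" using F1[OF c0(1)] by simp
  then have "specP 1 x2 (x3 + c0/k) 0 0" using HX[of 0 c0 0] by simp
  then have "x2 \<ge> 0" using F1[OF c0(2)] by simp
  have "specP 1 (x2 + (-x2/k) * k) (x3 + c0/k) 0 0" using F1[OF c0(2)] k by simp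
  then have "specP 1 (-x2/k) c0 0 0" using HX by blast
  then have "-x2/k \<ge> 0" using F1[OF c0(1)] by simp
  then have "x2 \<le> 0" using k by (simp add: divide_le_0_iff)
  have x2: "x2 = 0" using \<open>x2 \<ge> 0\<close> \<open>x2 \<le> 0\<close> by simp
  
  have b0: "-1/k < 0" "x2 + (-1/k) * k < 0" using k x2 by simp_all
  have "specP 1 (-1/k) 0 0 1" using F2[OF b0(1)] by simp
  then have "specP 1 (x2 + (-1/k) * k) x3 0 1" using HX[of "-1/k" 0 1] by simp
  then have "x3 \<ge> 0" using F2[OF b0(2)] by simp
  have "specP 1 (x2 + (-1/k) * k) (x3 + (-k * x3)/k) 0 1" using F2[OF b0(2)] k by simp
  then have "specP 1 (-1/k) (-k * x3) 0 1" using HX by blast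
  then have "-k * x3 \<ge> 0" using F2[OF b0(1)] by simp
  then have "x3 \<le> 0" using k by (simp add: mult_le_0_iff)
  have x3: "x3 = 0" using \<open>x3 \<ge> 0\<close> \<open>x3 \<le> 0\<close> by simp
  
  define c1 where "c1 = -k * (\<bar>y3\<bar>+1)"
  have c1: "c1 < 0" "y3 + c1/k < 0" unfolding c1_def using k by (simp_all add: mult_pos_pos)
  have "specP 0 0 c1 1 1" using F3[OF c1(1)] by simp
  then have "specP 0 y2 (y3 + c1/k) 1 1" using HY[of 0 c1 1] by simp
  then have "y2 \<ge> 0" using F3[OF c1(2)] by simp
  have "specP 0 (y2 + (-y2/k) * k) (y3 + c1/k) 1 1" using F3[OF c1(2)] k by simp
  then have "specP 0 (-y2/k) c1 1 1" using HY by blast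
  then have "-y2/k \<ge> 0" using F3[OF c1(1)] by simp
  then have "y2 \<le> 0" using k by (simp add: divide_le_0_iff)
  have y2: "y2 = 0" using \<open>y2 \<ge> 0\<close> \<open>y2 \<le> 0\<close> by simp
  
  have b1: "-1/k < 0" "y2 + (-1/k) * k < 0" using k y2 by simp_all
  have "specP 0 (-1/k) 0 1 0" using F4[OF b1(1)] by simp
  then have "specP 0 (y2 + (-1/k) * k) y3 1 0" using HY[of "-1/k" 0 0] by simp
  then have "y3 \<ge> 0" using F4[OF b1(2)] by simp
  have "specP 0 (y2 + (-1/k) * k) (y3 + (-k * y3)/k) 1 0" using F4[OF b1(2)] k by simp
  then have "specP 0 (-1/k) (-k * y3) 1 0" using HY by blast
  then have "-k * y3 \<ge> 0" using F4[OF b1(1)] by simp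
  then have "y3 \<le> 0" using k by (simp add: mult_le_0_iff)
  have y3: "y3 = 0" using \<open>y3 \<ge> 0\<close> \<open>y3 \<le> 0\<close> by simp
  show ?thesis using x1 x2 x3 x4 y1 y2 y3 y4 by simp
qed



lemma lin3: fixes A B C :: real
  assumes "A + B + C = 1" "A + 4 * B + 16 * C = 4" "A + 9 * B + 81 * C = 9"
  shows "A = 0 \<and> B = 1 \<and> C = 0"
  using assms by linarith

lemma M2_core:
  fixes x1 x2 x3 x4 u1 u2 u3 u4 vv1 vv2 vv3 vv4 y1 y2 y3 y4 :: real
  assumes H: "\<And>a b c d l. specP a b c d l \<longleftrightarrow>
       specP (a * x1 + b * u1 + c* vv1 + d * y1) (a * x2 + b * u2 + c* vv2 + d * y2)
             (a * x3 + b * u3 + c* vv3 + d * y3) (a * x4 + b * u4 + c* vv4 + d * y4) l"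
  shows "\<exists>k>0. (\<forall>a b c d.
       a * x1 + b * u1 + c* vv1 + d * y1 = a \<and> a * x2 + b * u2 + c* vv2 + d * y2 = k * b \<and>
       a * x3 + b * u3 + c* vv3 + d * y3 = c/k \<and> a * x4 + b * u4 + c* vv4 + d * y4 = d) \<or>
     (\<forall>a b c d.
       a * x1 + b * u1 + c* vv1 + d * y1 = d \<and> a * x2 + b * u2 + c* vv2 + d * y2 = c/k \<and>
       a * x3 + b * u3 + c* vv3 + d * y3 = k * b \<and> a * x4 + b * u4 + c* vv4 + d * y4 = a)"
proof -
  have U: "u1 = 0 \<and> u4 = 0"
  proof (rule diag_zero)
    show "\<forall>l. specP u1 u2 u3 u4 l \<longrightarrow> l = 0"
      using H[of 0 1 0 0] spec_0bc0[of 1 0] by auto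
    show "\<forall>l. specP (-u1) (-u2) (-u3) (-u4) l \<longrightarrow> l = 0"
      using H[of 0 "-1" 0 0] spec_0bc0[of "-1" 0] by auto
  qed
  have VV: "vv1 = 0 \<and> vv4 = 0"
  proof (rule diag_zero)
    show "\<forall>l. specP vv1 vv2 vv3 vv4 l \<longrightarrow> l = 0"
      using H[of 0 0 1 0] spec_0bc0[of 0 1] by auto
    show "\<forall>l. specP (-vv1) (-vv2) (-vv3) (-vv4) l \<longrightarrow> l = 0"
      using H[of 0 0 "-1" 0] spec_0bc0[of 0 "-1"] by auto
  qed
  have P: "u2 + s* vv2 > 0 \<and> u3 + s* vv3 > 0 \<and> (u2 + s* vv2) * (u3 + s* vv3) = l * l" if "l > 0" "s = l * l" for l s
  proof -
    have "specP 0 1 s 0 l" using spec_sq[OF that(1)] that(2) by simp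
    then have "specP 0 (u2 + s* vv2) (u3 + s* vv3) 0 l" using H[of 0 1 s 0 l] U VV by simp
    then show ?thesis using spec_pos[OF that(1)] by blast
  qed
  have P1: "u2 + vv2 > 0" "u3 + vv3 > 0" "(u2 + vv2) * (u3 + vv3) = 1" using P[of 1 1] by simp_all
  have P2: "(u2 + 4* vv2) * (u3 + 4* vv3) = 4" using P[of 2 4] by simp
  have P3: "(u2 + 9* vv2) * (u3 + 9* vv3) = 9" using P[of 3 9] by simp
  have E1: "u2 * u3 + (u2* vv3 + u3* vv2) + vv2* vv3 = 1" using P1(3) by (simp add: algebra_simps)
  have E2: "u2 * u3 + 4 * (u2* vv3 + u3* vv2) + 16 * (vv2* vv3) = 4" using P2 by (simp add: algebra_simps)
  have E3: "u2 * u3 + 9 * (u2* vv3 + u3* vv2) + 81 * (vv2* vv3) = 9" using P3 by (simp add: algebra_simps)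
  have Q0: "u2 * u3 = 0 \<and> u2* vv3 + u3* vv2 = 1 \<and> vv2* vv3 = 0" by (rule lin3[OF E1 E2 E3])
  then have Q: "u2 * u3 = 0" "vv2* vv3 = 0" "u2* vv3 + u3* vv2 = 1" by simp_all
  show ?thesis
  proof (cases "u3 = 0")
    case True
    then have "u2* vv3 = 1" using Q by simp
    then have "vv3 \<noteq> 0" by auto
    then have vv2: "vv2 = 0" using Q by simp
    define k where "k = u2"
    have k: "k > 0" using P1(1) vv2 unfolding k_def by simp
    have vv3: "vv3 = 1/k" using \<open>u2* vv3 = 1\<close> k unfolding k_def by (simp add: field_simps)
    have H': "specP a b c d l \<longleftrightarrow>
       specP (a * x1 + d * y1) (a * x2 + b * k + d * y2) (a * x3 + c/k + d * y3) (a * x4 + d * y4) l" for a b c d l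
      using H[of a b c d l] U VV True vv2 vv3 unfolding k_def by (simp add: ac_simps)
    have R: "x1 = 1 \<and> x2 = 0 \<and> x3 = 0 \<and> x4 = 0 \<and> y1 = 0 \<and> y2 = 0 \<and> y3 = 0 \<and> y4 = 1"
      using norm_core[OF k H'] .
    show ?thesis using k R U VV True vv2 vv3 unfolding k_def by (intro exI[of _ u2]) simp
  next
    case False
    then have u2: "u2 = 0" using Q by simp
    then have "u3* vv2 = 1" using Q by simp
    then have "vv2 \<noteq> 0" by auto
    then have vv3: "vv3 = 0" using Q by simp
    define k where "k = u3"
    have k: "k > 0" using P1(2) vv3 unfolding k_def by simp
    have vv2: "vv2 = 1/k" using \<open>u3* vv2 = 1\<close> k unfolding k_def by (simp add: field_simps)
    have H': "specP a b c d l \<longleftrightarrow>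
       specP (a * x4 + d * y4) (a * x3 + b * k + d * y3) (a * x2 + c/k + d * y2) (a * x1 + d * y1) l" for a b c d l
      using H[of a b c d l] U VV u2 vv3 vv2 specP_swap unfolding k_def by (simp add: ac_simps)
    have R: "x4 = 1 \<and> x3 = 0 \<and> x2 = 0 \<and> x1 = 0 \<and> y4 = 0 \<and> y3 = 0 \<and> y2 = 0 \<and> y1 = 1"
      using norm_core[OF k H'] .
    show ?thesis using k R U VV u2 vv2 vv3 unfolding k_def by (intro exI[of _ u3]) simp
  qed
qed



lemma spec_F: "specP 0 1 1 0 l \<longleftrightarrow> l = 0 \<or> l = 1"
proof
  assume "specP 0 1 1 0 l"
  then consider "bdP 0 1 1 0 l" | "intP 0 1 1 0 l" unfolding specP_def by auto
  then show "l = 0 \<or> l = 1"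
  proof cases
    case 1 then show ?thesis unfolding bdP_def by auto
  next
    case 2
    then obtain t where t: "t > 0" "1 = t * l" "l = t" unfolding intP_def by auto
    then have "(l - 1) * (l + 1) = 0" by (simp add: algebra_simps)
    then show ?thesis using t by auto
  qed
next
  assume "l = 0 \<or> l = 1"
  then show "specP 0 1 1 0 l" unfolding specP_def bdP_def intP_def
    by (auto intro: exI[of _ 1])
qed

lemma spec_mF: "specP 0 (-1) (-1) 0 l \<longleftrightarrow> l = -1"
proof
  assume "specP 0 (-1) (-1) 0 l"
  then have "intP 0 (-1) (-1) 0 l" unfolding specP_def bdP_def by auto
  then obtain t where t: "t > 0" "-1 = t * l" "l = -t" unfolding intP_def by auto
  then have "(t - 1) * (t + 1) = 0" by (simp add: algebra_simps)
  then show "l = -1" using t by auto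
next
  assume "l = -1"
  then show "specP 0 (-1) (-1) 0 l" unfolding specP_def bdP_def intP_def
    by (auto intro: exI[of _ 1])
qed

lemma NegU: assumes "w < 0" "intP a w w d l" "intP a w w d m" shows "l = m"
proof -
  obtain t where t: "t > 0" "w = t * (l-a)" "l - d = t * w" using assms(2) unfolding intP_def by auto
  obtain s where s: "s > 0" "w = s * (m-a)" "m - d = s * w" using assms(3) unfolding intP_def by auto
  have e1: "t * (d - a) = w - t * t * w" using t by (simp add: algebra_simps)
  have e2: "s * (d - a) = w - s * s * w" using s by (simp add: algebra_simps)
  have "s * (t * (d-a)) = t * (s * (d-a))" by simp
  then have "s * (w - t * t * w) = t * (w - s * s * w)" using e1 e2 by simp
  then have "w * ((s - t) * (1 + s * t)) = 0" by (simp add: algebra_simps)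
  moreover have "1 + s * t > 0" using s t by (simp add: add_pos_pos)
  ultimately have "s = t" using assms(1) by simp
  then have "t * (l - a) = t * (m - a)" using t s by simp
  then show ?thesis using t(1) by simp
qed

lemma PosU: assumes "w > 0" "intP m w w m l" shows "l = m + w"
proof -
  obtain t where t: "t > 0" "w = t * (l-m)" "l - m = t * w" using assms(2) unfolding intP_def by auto
  then have "w = t * t * w" by simp
  then have "w * ((t-1) * (t+1)) = 0" by (simp add: algebra_simps)
  then have "t = 1" using assms(1) t(1) by simp
  then show ?thesis using t by simp
qed

lemma G_lemma:
  assumes "\<And>l. specP g1 g2 g2 g4 l \<longleftrightarrow> (l = 0 \<or> l = 1)"
    and "\<And>l. specP (-g1) (-g2) (-g2) (-g4) l \<longleftrightarrow> l = -1"
  shows "g1 = 0 \<and> g2 = 1 \<and> g4 = 0"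
proof -
  consider "g2 > 0" | "g2 = 0" | "g2 < 0" by linarith
  then show ?thesis
  proof cases
    case 1
    have g1: "g1 = 0 \<or> g1 = 1" using assms(1)[of g1] 1 unfolding specP_def bdP_def by auto
    have g4: "g4 = 0 \<or> g4 = 1" using assms(1)[of g4] 1 unfolding specP_def bdP_def by auto
    have "specP (-g1) (-g2) (-g2) (-g4) (-1)" using assms(2) by simp
    then have "intP (-g1) (-g2) (-g2) (-g4) (-1)" using 1 unfolding specP_def bdP_def by auto
    then obtain t where t0: "t > 0" "-g2 = t * (-1 - (-g1))" "-1 - (-g4) = t * (-g2)" unfolding intP_def by blast
    then have t: "t > 0" "-g2 = t * (-1 + g1)" "-1 + g4 = t * (-g2)" by simp_all
    have "g1 \<noteq> 1" using t 1 by auto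
    then have g10: "g1 = 0" using g1 by simp
    then have "g2 = t" using t by simp
    then have "g4 = 1 - t * t" using t by (simp add: algebra_simps)
    then have "t * t = 1 \<or> t * t = 0" using g4 by auto
    then have "(t-1) * (t+1) = 0 \<or> t = 0" by (auto simp: algebra_simps)
    then have "t = 1" using t(1) by auto
    then show ?thesis using g10 \<open>g2 = t\<close> \<open>g4 = 1 - t * t\<close> by simp
  next
    case 2
    have "specP (-g1) (-g2) (-g2) (-g4) (-g1)" "specP (-g1) (-g2) (-g2) (-g4) (-g4)"
      using 2 unfolding specP_def bdP_def by auto
    then have "g1 = 1" "g4 = 1" using assms(2) by auto
    have "specP g1 g2 g2 g4 0" using assms(1) by simp
    then show ?thesis using 2 \<open>g1 = 1\<close> \<open>g4 = 1\<close> unfolding specP_def bdP_def intP_def by auto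
  next
    case 3
    have "specP g1 g2 g2 g4 0" "specP g1 g2 g2 g4 1" using assms(1) by auto
    then have "intP g1 g2 g2 g4 0" "intP g1 g2 g2 g4 1" using 3 unfolding specP_def bdP_def by auto
    then have "(0::real) = 1" using NegU[OF 3] by blast
    then show ?thesis by simp
  qed
qed

lemma spec_diag: "specP z1 0 0 z4 l \<longleftrightarrow> l = z1 \<or> l = z4"
  unfolding specP_def bdP_def intP_def by auto

lemma diag_sym:
  assumes e: "(e1 = 1 \<and> e4 = 0) \<or> (e1 = 0 \<and> e4 = 1)"
    and HZ: "\<And>b l. specP e1 b b e4 l \<longleftrightarrow> specP z1 (z2+b) (z2+b) z4 l"
  shows "z2 = 0 \<and> ((z1 = 0 \<and> z4 = 1) \<or> (z1 = 1 \<and> z4 = 0))"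
proof -
  have E0: "specP e1 0 0 e4 l \<longleftrightarrow> l = 0 \<or> l = 1" for l
    unfolding spec_diag using e by auto
  have S: "specP z1 z2 z2 z4 l \<longleftrightarrow> l = 0 \<or> l = 1" for l
    using HZ[of 0 l] E0 by simp
  have z2: "z2 = 0"
  proof -
    consider "z2 < 0" | "z2 > 0" | "z2 = 0" by linarith
    then show ?thesis
    proof cases
      case 1
      have "specP z1 z2 z2 z4 0" "specP z1 z2 z2 z4 1" using S by auto
      then have "intP z1 z2 z2 z4 0" "intP z1 z2 z2 z4 1" using 1 unfolding specP_def bdP_def by auto
      then have "(0::real) = 1" using NegU[OF 1] by blast
      then show ?thesis by simp
    next
      case 2
      have "specP z1 (z2 + (-z2)) (z2 + (-z2)) z4 z1" "specP z1 (z2 + (-z2)) (z2 + (-z2)) z4 z4"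
        by (simp_all add: spec_diag)
      then have "specP e1 (-z2) (-z2) e4 z1" "specP e1 (-z2) (-z2) e4 z4" using HZ by blast+
      then have "intP e1 (-z2) (-z2) e4 z1" "intP e1 (-z2) (-z2) e4 z4"
        using 2 unfolding specP_def bdP_def by auto
      then have zz: "z4 = z1" using NegU[of "-z2"] 2 by force
      have mem: "l = z1 \<or> l = z1 + z2" if "l = 0 \<or> l = 1" for l
      proof -
        have "specP z1 z2 z2 z1 l" using S that zz by simp
        then show ?thesis using PosU[OF 2] unfolding specP_def bdP_def by auto
      qed
      have "z1 = 0 \<and> z2 = 1" using mem[of 0] mem[of 1] 2 by auto
      then have "specP z1 (z2 + (-1)) (z2 + (-1)) z4 0" using zz by (simp add: spec_diag)
      then have "specP e1 (-1) (-1) e4 0" using HZ by blast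
      then show ?thesis using e unfolding specP_def bdP_def intP_def by auto
    next
      case 3 then show ?thesis .
    qed
  qed
  have S0: "l = z1 \<or> l = z4 \<longleftrightarrow> l = 0 \<or> l = 1" for l using S[of l] z2 spec_diag by simp
  show ?thesis using z2 S0[of 0] S0[of 1] S0[of z1] S0[of z4] by auto
qed

lemma sym_core:
  fixes x1 x2 x4 g1 g2 g4 y1 y2 y4 :: real
  assumes H: "\<And>a b d l. specP a b b d l \<longleftrightarrow>
       specP (a * x1 + b * g1 + d * y1) (a * x2 + b * g2 + d * y2) (a * x2 + b * g2 + d * y2) (a * x4 + b * g4 + d * y4) l"
  shows "(\<forall>a b d. a * x1 + b * g1 + d * y1 = a \<and> a * x2 + b * g2 + d * y2 = b \<and> a * x4 + b * g4 + d * y4 = d) \<or>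
         (\<forall>a b d. a * x1 + b * g1 + d * y1 = d \<and> a * x2 + b * g2 + d * y2 = b \<and> a * x4 + b * g4 + d * y4 = a)"
proof -
  have G: "g1 = 0 \<and> g2 = 1 \<and> g4 = 0"
  proof (rule G_lemma)
    show "specP g1 g2 g2 g4 l \<longleftrightarrow> (l = 0 \<or> l = 1)" for l
      using H[of 0 1 0 l] spec_F by simp
    show "specP (-g1) (-g2) (-g2) (-g4) l \<longleftrightarrow> l = -1" for l
      using H[of 0 "-1" 0 l] spec_mF by simp
  qed
  have X: "x2 = 0 \<and> ((x1 = 0 \<and> x4 = 1) \<or> (x1 = 1 \<and> x4 = 0))"
  proof (rule diag_sym[of 1 0])
    show "specP 1 b b 0 l \<longleftrightarrow> specP x1 (x2+b) (x2+b) x4 l" for b l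
      using H[of 1 b 0 l] G by (simp add: ac_simps)
  qed simp
  have Y: "y2 = 0 \<and> ((y1 = 0 \<and> y4 = 1) \<or> (y1 = 1 \<and> y4 = 0))"
  proof (rule diag_sym[of 0 1])
    show "specP 0 b b 1 l \<longleftrightarrow> specP y1 (y2+b) (y2+b) y4 l" for b l
      using H[of 0 b 1 l] G by (simp add: ac_simps)
  qed simp
  have I: "specP (x1 + y1) 0 0 (x4 + y4) 1"
    using H[of 1 0 1 1] X Y spec_diag[of 1 1 1] by simp
  have I': "1 = x1 + y1 \<or> 1 = x4 + y4" using I unfolding spec_diag by simp
  have x2: "x2 = 0" and y2: "y2 = 0" using X Y by simp_all
  have XX: "(x1 = 0 \<and> x4 = 1) \<or> (x1 = 1 \<and> x4 = 0)" using X by simp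
  have YY: "(y1 = 0 \<and> y4 = 1) \<or> (y1 = 1 \<and> y4 = 0)" using Y by simp
  from XX YY I' show ?thesis
    apply (elim disjE conjE)
    using G x2 y2 by simp_all
qed



definition mk :: "real \<Rightarrow> real \<Rightarrow> real \<Rightarrow> real \<Rightarrow> mat2" where
  "mk a b c d = vector [vector [(a - c - b + d)/2, (a - c + b - d)/2], vector [(a + c - b - d)/2, (a + c + b + d)/2]]"

lemma mk_P: "pa (mk a b c d) = a" "pb (mk a b c d) = b" "pc (mk a b c d) = c" "pd (mk a b c d) = d"
  unfolding mk_def pa_def pb_def pc_def pd_def by (simp_all add: field_simps)

lemma mk_inv: "mk (pa A) (pb A) (pc A) (pd A) = A"
  unfolding mk_def pa_def pb_def pc_def pd_def vec_eq_iff forall_2 by (simp add: field_simps)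

lemma mk_lin: "mk a b c d = a *\<^sub>R mk 1 0 0 0 + b *\<^sub>R mk 0 1 0 0 + c *\<^sub>R mk 0 0 1 0 + d *\<^sub>R mk 0 0 0 1"
  unfolding mk_def vec_eq_iff forall_2 by (simp add: field_simps)

lemma mk_lin_sym: "mk a b b d = a *\<^sub>R mk 1 0 0 0 + b *\<^sub>R mk 0 1 1 0 + d *\<^sub>R mk 0 0 0 1"
  unfolding mk_def vec_eq_iff forall_2 by (simp add: field_simps)

lemma P_add: "pa (A + B) = pa A + pa B" "pb (A + B) = pb A + pb B" "pc (A + B) = pc A + pc B" "pd (A + B) = pd A + pd B"
  unfolding pa_def pb_def pc_def pd_def by (simp_all add: field_simps)

lemma P_scale: "pa (r *\<^sub>R A) = r * pa A" "pb (r *\<^sub>R A) = r * pb A" "pc (r *\<^sub>R A) = r * pc A" "pd (r *\<^sub>R A) = r * pd A"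
  unfolding pa_def pb_def pc_def pd_def by (simp_all add: field_simps)

lemma sym_iff: "A \<in> sym_mats \<longleftrightarrow> pb A = pc A"
proof -
  have "A \<in> sym_mats \<longleftrightarrow> A$1$2 = A$2$1"
    unfolding sym_mats_def mem_Collect_eq vec_eq_iff forall_2 transpose_def by auto
  also have "\<dots> \<longleftrightarrow> pb A = pc A" unfolding pb_def pc_def by (simp add: field_simps)
  finally show ?thesis .
qed

lemma sym_add: "A \<in> sym_mats \<Longrightarrow> B \<in> sym_mats \<Longrightarrow> A + B \<in> sym_mats"
  unfolding sym_iff P_add by simp
lemma sym_scale: "A \<in> sym_mats \<Longrightarrow> r *\<^sub>R A \<in> sym_mats"
  unfolding sym_iff P_scale by simp
lemma sym_mk: "mk a b b d \<in> sym_mats"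
  unfolding sym_iff mk_P ..

lemma key_UNIV:
  fixes \<phi> :: "mat2 \<Rightarrow> mat2"
  assumes add: "\<forall>A B. \<phi> (A + B) = \<phi> A + \<phi> B"
    and sc: "\<forall>c A. \<phi> (c *\<^sub>R A) = c *\<^sub>R \<phi> A"
    and sp: "\<forall>A. L_spectrum (\<phi> A) = L_spectrum A"
  shows "\<exists>k>0. (\<forall>A. pa (\<phi> A) = pa A \<and> pb (\<phi> A) = k * pb A \<and> pc (\<phi> A) = pc A / k \<and> pd (\<phi> A) = pd A) \<or>
                (\<forall>A. pa (\<phi> A) = pd A \<and> pb (\<phi> A) = pc A / k \<and> pc (\<phi> A) = k * pb A \<and> pd (\<phi> A) = pa A)"
proof -
  define X where "X = \<phi> (mk 1 0 0 0)"
  define U where "U = \<phi> (mk 0 1 0 0)"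
  define V where "V = \<phi> (mk 0 0 1 0)"
  define Y where "Y = \<phi> (mk 0 0 0 1)"
  have phimk: "\<phi> (mk a b c d) = a *\<^sub>R X + b *\<^sub>R U + c *\<^sub>R V + d *\<^sub>R Y" for a b c d
    unfolding X_def U_def V_def Y_def using add sc by (subst mk_lin) simp
  have PP: "pa (\<phi> (mk a b c d)) = a * pa X + b * pa U + c * pa V + d * pa Y"
           "pb (\<phi> (mk a b c d)) = a * pb X + b * pb U + c * pb V + d * pb Y"
           "pc (\<phi> (mk a b c d)) = a * pc X + b * pc U + c * pc V + d * pc Y"
           "pd (\<phi> (mk a b c d)) = a * pd X + b * pd U + c * pd V + d * pd Y" for a b c d
    unfolding phimk P_add P_scale by simp_all
  have H: "specP a b c d l \<longleftrightarrow>
       specP (a * pa X + b * pa U + c * pa V + d * pa Y) (a * pb X + b * pb U + c * pb V + d * pb Y)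
             (a * pc X + b * pc U + c * pc V + d * pc Y) (a * pd X + b * pd U + c * pd V + d * pd Y) l" (is "_ \<longleftrightarrow> ?R") for a b c d l
  proof -
    have "specP a b c d l \<longleftrightarrow> l \<in> L_spectrum (mk a b c d)" unfolding L_spec_iff mk_P ..
    also have "\<dots> \<longleftrightarrow> l \<in> L_spectrum (\<phi> (mk a b c d))" using sp by simp
    also have "\<dots> \<longleftrightarrow> ?R" unfolding L_spec_iff PP ..
    finally show ?thesis .
  qed
  obtain k where k: "k > 0" and R: "(\<forall>a b c d.
       a * pa X + b * pa U + c * pa V + d * pa Y = a \<and> a * pb X + b * pb U + c * pb V + d * pb Y = k * b \<and>
       a * pc X + b * pc U + c * pc V + d * pc Y = c/k \<and> a * pd X + b * pd U + c * pd V + d * pd Y = d) \<or>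
     (\<forall>a b c d.
       a * pa X + b * pa U + c * pa V + d * pa Y = d \<and> a * pb X + b * pb U + c * pb V + d * pb Y = c/k \<and>
       a * pc X + b * pc U + c * pc V + d * pc Y = k * b \<and> a * pd X + b * pd U + c * pd V + d * pd Y = a)"
    using M2_core[OF H] by blast
  show ?thesis
  proof (intro exI[of _ k] conjI k)
    show "(\<forall>A. pa (\<phi> A) = pa A \<and> pb (\<phi> A) = k * pb A \<and> pc (\<phi> A) = pc A / k \<and> pd (\<phi> A) = pd A) \<or>
          (\<forall>A. pa (\<phi> A) = pd A \<and> pb (\<phi> A) = pc A / k \<and> pc (\<phi> A) = k * pb A \<and> pd (\<phi> A) = pa A)"
      using R
    proof
      assume N: "\<forall>a b c d.
       a * pa X + b * pa U + c * pa V + d * pa Y = a \<and> a * pb X + b * pb U + c * pb V + d * pb Y = k * b \<and>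
       a * pc X + b * pc U + c * pc V + d * pc Y = c/k \<and> a * pd X + b * pd U + c * pd V + d * pd Y = d"
      have "pa (\<phi> A) = pa A \<and> pb (\<phi> A) = k * pb A \<and> pc (\<phi> A) = pc A / k \<and> pd (\<phi> A) = pd A" for A
        using PP[of "pa A" "pb A" "pc A" "pd A"] N unfolding mk_inv by simp
      then show ?thesis by blast
    next
      assume N: "\<forall>a b c d.
       a * pa X + b * pa U + c * pa V + d * pa Y = d \<and> a * pb X + b * pb U + c * pb V + d * pb Y = c/k \<and>
       a * pc X + b * pc U + c * pc V + d * pc Y = k * b \<and> a * pd X + b * pd U + c * pd V + d * pd Y = a"
      have "pa (\<phi> A) = pd A \<and> pb (\<phi> A) = pc A / k \<and> pc (\<phi> A) = k * pb A \<and> pd (\<phi> A) = pa A" for A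
        using PP[of "pa A" "pb A" "pc A" "pd A"] N unfolding mk_inv by simp
      then show ?thesis by blast
    qed
  qed
qed

lemma key_sym:
  fixes \<phi> :: "mat2 \<Rightarrow> mat2"
  assumes add: "\<forall>A\<in>sym_mats. \<forall>B\<in>sym_mats. \<phi> (A + B) = \<phi> A + \<phi> B"
    and sc: "\<forall>c. \<forall>A\<in>sym_mats. \<phi> (c *\<^sub>R A) = c *\<^sub>R \<phi> A"
    and into: "\<phi> ` sym_mats \<subseteq> sym_mats"
    and sp: "\<forall>A\<in>sym_mats. L_spectrum (\<phi> A) = L_spectrum A"
  shows "\<exists>k>0. (\<forall>A\<in>sym_mats. pa (\<phi> A) = pa A \<and> pb (\<phi> A) = k * pb A \<and> pc (\<phi> A) = pc A / k \<and> pd (\<phi> A) = pd A) \<or>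
                (\<forall>A\<in>sym_mats. pa (\<phi> A) = pd A \<and> pb (\<phi> A) = pc A / k \<and> pc (\<phi> A) = k * pb A \<and> pd (\<phi> A) = pa A)"
proof -
  define X where "X = \<phi> (mk 1 0 0 0)"
  define G where "G = \<phi> (mk 0 1 1 0)"
  define Y where "Y = \<phi> (mk 0 0 0 1)"
  have s1: "mk 1 0 0 0 \<in> sym_mats" "mk 0 1 1 0 \<in> sym_mats" "mk 0 0 0 1 \<in> sym_mats"
    using sym_mk[of 1 0 0] sym_mk[of 0 1 0] sym_mk[of 0 0 1] by simp_all
  have l1: "\<phi> (p + q) = \<phi> p + \<phi> q" if "p \<in> sym_mats" "q \<in> sym_mats" for p q
    using add that by blast
  have l2: "\<phi> (r *\<^sub>R p) = r *\<^sub>R \<phi> p" if "p \<in> sym_mats" for r p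
    using sc that by blast
  have phimk: "\<phi> (mk a b b d) = a *\<^sub>R X + b *\<^sub>R G + d *\<^sub>R Y" for a b d
  proof -
    have m1: "a *\<^sub>R mk 1 0 0 0 \<in> sym_mats" "b *\<^sub>R mk 0 1 1 0 \<in> sym_mats" "d *\<^sub>R mk 0 0 0 1 \<in> sym_mats"
      using s1 sym_scale by blast+
    have m2: "a *\<^sub>R mk 1 0 0 0 + b *\<^sub>R mk 0 1 1 0 \<in> sym_mats" using m1 sym_add by blast
    have "\<phi> (mk a b b d) = \<phi> (a *\<^sub>R mk 1 0 0 0 + b *\<^sub>R mk 0 1 1 0) + \<phi> (d *\<^sub>R mk 0 0 0 1)"
      unfolding mk_lin_sym[of a b d] using l1[OF m2 m1(3)] .
    also have "\<dots> = \<phi> (a *\<^sub>R mk 1 0 0 0) + \<phi> (b *\<^sub>R mk 0 1 1 0) + \<phi> (d *\<^sub>R mk 0 0 0 1)"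
      using l1[OF m1(1) m1(2)] by simp
    also have "\<dots> = a *\<^sub>R X + b *\<^sub>R G + d *\<^sub>R Y"
      unfolding X_def G_def Y_def l2[OF s1(1)] l2[OF s1(2)] l2[OF s1(3)] ..
    finally show ?thesis .
  qed
  have i1: "X \<in> sym_mats" "G \<in> sym_mats" "Y \<in> sym_mats"
    using into s1 unfolding X_def G_def Y_def by blast+
  have XGY: "pb X = pc X" "pb G = pc G" "pb Y = pc Y"
    using i1 unfolding sym_iff by simp_all
  have PP: "pa (\<phi> (mk a b b d)) = a * pa X + b * pa G + d * pa Y"
           "pb (\<phi> (mk a b b d)) = a * pb X + b * pb G + d * pb Y"
           "pc (\<phi> (mk a b b d)) = a * pb X + b * pb G + d * pb Y"
           "pd (\<phi> (mk a b b d)) = a * pd X + b * pd G + d * pd Y" for a b d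
    unfolding phimk P_add P_scale XGY by simp_all
  have H: "specP a b b d l \<longleftrightarrow>
       specP (a * pa X + b * pa G + d * pa Y) (a * pb X + b * pb G + d * pb Y)
             (a * pb X + b * pb G + d * pb Y) (a * pd X + b * pd G + d * pd Y) l" (is "_ \<longleftrightarrow> ?R") for a b d l
  proof -
    have "specP a b b d l \<longleftrightarrow> l \<in> L_spectrum (mk a b b d)" unfolding L_spec_iff mk_P ..
    also have "\<dots> \<longleftrightarrow> l \<in> L_spectrum (\<phi> (mk a b b d))" using sp sym_mk by simp
    also have "\<dots> \<longleftrightarrow> ?R" unfolding L_spec_iff PP ..
    finally show ?thesis .
  qed
  have R: "(\<forall>a b d. a * pa X + b * pa G + d * pa Y = a \<and> a * pb X + b * pb G + d * pb Y = b \<and> a * pd X + b * pd G + d * pd Y = d) \<or>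
         (\<forall>a b d. a * pa X + b * pa G + d * pa Y = d \<and> a * pb X + b * pb G + d * pb Y = b \<and> a * pd X + b * pd G + d * pd Y = a)"
    using sym_core[OF H] .
  have AW: "A = mk (pa A) (pb A) (pb A) (pd A)" if "A \<in> sym_mats" for A
    using mk_inv[of A] that unfolding sym_iff by simp
  show ?thesis
  proof (intro exI[of _ "1::real"] conjI)
    show "(1::real) > 0" by simp
    show "(\<forall>A\<in>sym_mats. pa (\<phi> A) = pa A \<and> pb (\<phi> A) = 1 * pb A \<and> pc (\<phi> A) = pc A / 1 \<and> pd (\<phi> A) = pd A) \<or>
          (\<forall>A\<in>sym_mats. pa (\<phi> A) = pd A \<and> pb (\<phi> A) = pc A / 1 \<and> pc (\<phi> A) = 1 * pb A \<and> pd (\<phi> A) = pa A)"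
      using R
    proof
      assume N: "\<forall>a b d. a * pa X + b * pa G + d * pa Y = a \<and> a * pb X + b * pb G + d * pb Y = b \<and> a * pd X + b * pd G + d * pd Y = d"
      have "pa (\<phi> A) = pa A \<and> pb (\<phi> A) = 1 * pb A \<and> pc (\<phi> A) = pc A / 1 \<and> pd (\<phi> A) = pd A" if "A \<in> sym_mats" for A
      proof -
        have eA: "\<phi> A = \<phi> (mk (pa A) (pb A) (pb A) (pd A))" using AW[OF that] by (rule arg_cong)
        have pbc: "pc A = pb A" using that unfolding sym_iff by simp
        show ?thesis unfolding eA PP pbc using N by simp
      qed
      then show ?thesis by blast
    next
      assume N: "\<forall>a b d. a * pa X + b * pa G + d * pa Y = d \<and> a * pb X + b * pb G + d * pb Y = b \<and> a * pd X + b * pd G + d * pd Y = a"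
      have "pa (\<phi> A) = pd A \<and> pb (\<phi> A) = pc A / 1 \<and> pc (\<phi> A) = 1 * pb A \<and> pd (\<phi> A) = pa A" if "A \<in> sym_mats" for A
      proof -
        have eA: "\<phi> A = \<phi> (mk (pa A) (pb A) (pb A) (pd A))" using AW[OF that] by (rule arg_cong)
        have pbc: "pc A = pb A" using that unfolding sym_iff by simp
        show ?thesis unfolding eA PP pbc using N by simp
      qed
      then show ?thesis by blast
    qed
  qed
qed

theorem corollary1p2:
  fixes W :: "mat2 set" and \<phi> :: "mat2 \<Rightarrow> mat2"
  assumes "W = UNIV \<or> W = sym_mats"
    and "\<forall>A\<in>W. \<forall>B\<in>W. \<phi> (A + B) = \<phi> A + \<phi> B"
    and "\<forall>c. \<forall>A\<in>W. \<phi> (c *\<^sub>R A) = c *\<^sub>R \<phi> A"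
    and "\<phi> ` W \<subseteq> W"
    and "\<forall>A\<in>W. L_spectrum (\<phi> A) = L_spectrum A"
  shows "\<forall>A\<in>W. L_spectrum_int A = L_spectrum_int (\<phi> A) \<and>
                 L_spectrum_bd A = L_spectrum_bd (\<phi> A)"
proof -
  have "\<exists>k>0. (\<forall>A\<in>W. pa (\<phi> A) = pa A \<and> pb (\<phi> A) = k * pb A \<and> pc (\<phi> A) = pc A / k \<and> pd (\<phi> A) = pd A) \<or>
                (\<forall>A\<in>W. pa (\<phi> A) = pd A \<and> pb (\<phi> A) = pc A / k \<and> pc (\<phi> A) = k * pb A \<and> pd (\<phi> A) = pa A)"
    using assms(1)
  proof
    assume W: "W = UNIV"
    have a1: "\<forall>A B. \<phi> (A + B) = \<phi> A + \<phi> B" using assms(2) unfolding W by blast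
    have a2: "\<forall>c A. \<phi> (c *\<^sub>R A) = c *\<^sub>R \<phi> A" using assms(3) unfolding W by blast
    have a3: "\<forall>A. L_spectrum (\<phi> A) = L_spectrum A" using assms(5) unfolding W by blast
    show ?thesis using key_UNIV[OF a1 a2 a3] unfolding W by blast
  next
    assume W: "W = sym_mats"
    show ?thesis using key_sym[of \<phi>] assms(2,3,4,5) unfolding W by blast
  qed
  then obtain k where k: "k > 0" and R:
    "(\<forall>A\<in>W. pa (\<phi> A) = pa A \<and> pb (\<phi> A) = k * pb A \<and> pc (\<phi> A) = pc A / k \<and> pd (\<phi> A) = pd A) \<or>
     (\<forall>A\<in>W. pa (\<phi> A) = pd A \<and> pb (\<phi> A) = pc A / k \<and> pc (\<phi> A) = k * pb A \<and> pd (\<phi> A) = pa A)"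
    by blast
  show ?thesis
  proof
    fix A assume A: "A \<in> W"
    have "(intP (pa (\<phi> A)) (pb (\<phi> A)) (pc (\<phi> A)) (pd (\<phi> A)) l \<longleftrightarrow> intP (pa A) (pb A) (pc A) (pd A) l) \<and>
          (bdP (pa (\<phi> A)) (pb (\<phi> A)) (pc (\<phi> A)) (pd (\<phi> A)) l \<longleftrightarrow> bdP (pa A) (pb A) (pc A) (pd A) l)" for l
      using R
    proof
      assume "\<forall>A\<in>W. pa (\<phi> A) = pa A \<and> pb (\<phi> A) = k * pb A \<and> pc (\<phi> A) = pc A / k \<and> pd (\<phi> A) = pd A"
      then have e: "pa (\<phi> A) = pa A" "pb (\<phi> A) = k * pb A" "pc (\<phi> A) = pc A / k" "pd (\<phi> A) = pd A" using A by blast+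
      show ?thesis unfolding e
        using intP_scale[OF k, of "pa A" "pb A" "pc A" "pd A" l] bdP_scale[OF k, of "pa A" "pb A" "pc A" "pd A" l] by simp
    next
      assume "\<forall>A\<in>W. pa (\<phi> A) = pd A \<and> pb (\<phi> A) = pc A / k \<and> pc (\<phi> A) = k * pb A \<and> pd (\<phi> A) = pa A"
      then have e: "pa (\<phi> A) = pd A" "pb (\<phi> A) = pc A / k" "pc (\<phi> A) = k * pb A" "pd (\<phi> A) = pa A" using A by blast+
      show ?thesis unfolding e
        using intP_swap[of "pa A" "k * pb A" "pc A / k" "pd A" l] bdP_swap[of "pa A" "k * pb A" "pc A / k" "pd A" l]
          intP_scale[OF k, of "pa A" "pb A" "pc A" "pd A" l] bdP_scale[OF k, of "pa A" "pb A" "pc A" "pd A" l] by simp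
    qed
    then show "L_spectrum_int A = L_spectrum_int (\<phi> A) \<and> L_spectrum_bd A = L_spectrum_bd (\<phi> A)"
      unfolding set_eq_iff L_int_iff L_bd_iff by blast
  qed
qed

end
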